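(* Let $r\ge 3$ be a prime power and let $q=r^2$. If there exist Hermitian self-orthogonal linear codes over $\mathbb{F}_q$ with parameters $[m,k_1,d_1]_q$ and $[m,k_2,d_2]_q$, then there exists a Hermitian self-orthogonal linear code over $\mathbb{F}_q$ with parameters $[2m,k_1+k_2,d]_q$ where $d\ge\min\{2d_1,d_2\}$.
   Context: For $a\in\mathbb{F}_q$, $\overline{a}:=a^r$. The Hermitian inner product on $\mathbb{F}_q^n$ is $\langle u,v\rangle_H=\sum_i u_i\overline{v_i}$; a linear code $C$ is Hermitian self-orthogonal if $C\subseteq C^{\perp_H}$, where $C^{\perp_H}$ is its dual under this inner product. A code with parameters $[n,k,d]_q$ is a linear code of length $n$, dimension $k$ and minimum Hamming weight $d$ over $\mathbb{F}_q$. *)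

theory Defs
  imports "HOL-Number_Theory.Number_Theory" "HOL-Library.Function_Algebras"
begin

text \<open>Vectors of length n over a field 'a are modelled as functions nat => 'a
  vanishing outside {0..<n}; scalar multiplication is pointwise.\<close>

definition fscale :: "'a::field \<Rightarrow> (nat \<Rightarrow> 'a) \<Rightarrow> (nat \<Rightarrow> 'a)" where
  "fscale c v = (\<lambda>i. c * v i)"

definition vecs :: "nat \<Rightarrow> (nat \<Rightarrow> 'a::zero) set" where
  "vecs n = {v. \<forall>i\<ge>n. v i = 0}"

definition linear_code :: "nat \<Rightarrow> (nat \<Rightarrow> 'a::field) set \<Rightarrow> bool" where
  "linear_code n C \<longleftrightarrow> C \<subseteq> vecs n \<and> module.subspace fscale C"

definition code_dim :: "(nat \<Rightarrow> 'a::field) set \<Rightarrow> nat" where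
  "code_dim C = vector_space.dim fscale C"

definition hweight :: "nat \<Rightarrow> (nat \<Rightarrow> 'a::zero) \<Rightarrow> nat" where
  "hweight n v = card {i. i < n \<and> v i \<noteq> 0}"

definition has_min_weight :: "nat \<Rightarrow> (nat \<Rightarrow> 'a::zero) set \<Rightarrow> nat \<Rightarrow> bool" where
  "has_min_weight n C d \<longleftrightarrow>
     (\<exists>v\<in>C. v \<noteq> 0 \<and> hweight n v = d) \<and> (\<forall>v\<in>C. v \<noteq> 0 \<longrightarrow> d \<le> hweight n v)"

definition is_nkd_code :: "nat \<Rightarrow> nat \<Rightarrow> nat \<Rightarrow> (nat \<Rightarrow> 'a::field) set \<Rightarrow> bool" where
  "is_nkd_code n k d C \<longleftrightarrow> linear_code n C \<and> code_dim C = k \<and> has_min_weight n C d"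

text \<open>Hermitian inner product with conjugation a \<mapsto> a^r (q = r^2).\<close>
definition herm_ip :: "nat \<Rightarrow> nat \<Rightarrow> (nat \<Rightarrow> 'a::field) \<Rightarrow> (nat \<Rightarrow> 'a) \<Rightarrow> 'a" where
  "herm_ip r n u v = (\<Sum>i<n. u i * (v i) ^ r)"

definition herm_dual :: "nat \<Rightarrow> nat \<Rightarrow> (nat \<Rightarrow> 'a::field) set \<Rightarrow> (nat \<Rightarrow> 'a) set" where
  "herm_dual r n C = {v \<in> vecs n. \<forall>u\<in>C. herm_ip r n u v = 0}"

definition herm_self_orth :: "nat \<Rightarrow> nat \<Rightarrow> (nat \<Rightarrow> 'a::field) set \<Rightarrow> bool" where
  "herm_self_orth r n C \<longleftrightarrow> C \<subseteq> herm_dual r n C"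

end

theory Submission
  imports Defs "HOL-Computational_Algebra.Polynomial"
begin
lemma vs_fscale: "vector_space (fscale :: 'a::field \<Rightarrow> (nat \<Rightarrow> 'a) \<Rightarrow> _)"
  by unfold_locales (auto simp: fscale_def algebra_simps)
interpretation VS: vector_space "fscale :: 'a::field \<Rightarrow> (nat \<Rightarrow> 'a) \<Rightarrow> _"
  by (rule vs_fscale)

lemma finite_vecs: "finite (vecs n :: (nat \<Rightarrow> 'a::{finite,zero}) set)"
proof -
  have "vecs n \<subseteq> (\<lambda>f i. if i < n then f i else 0) ` (PiE {..<n} (\<lambda>_. (UNIV::'a set)))"
  proof
    fix v :: "nat \<Rightarrow> 'a" assume "v \<in> vecs n"
    then have "v = (\<lambda>i. if i < n then restrict v {..<n} i else 0)"
      by (auto simp: vecs_def fun_eq_iff)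
    then show "v \<in> (\<lambda>f i. if i < n then f i else 0) ` (PiE {..<n} (\<lambda>_. (UNIV::'a set)))"
      by (intro image_eqI[of _ _ "restrict v {..<n}"]) auto
  qed
  then show ?thesis by (rule finite_subset) (intro finite_imageI finite_PiE; simp)
qed

lemma card_subspace:
  fixes V :: "(nat \<Rightarrow> 'a::{finite,field}) set"
  assumes "VS.subspace V" "finite V"
  shows "card V = card (UNIV::'a set) ^ VS.dim V"
proof -
  obtain B where B: "B \<subseteq> V" "VS.independent B" "V \<subseteq> VS.span B" "card B = VS.dim V"
    using VS.basis_exists by blast
  have fB: "finite B" using B(1) assms(2) finite_subset by blast
  have spanB: "VS.span B = V" using VS.span_minimal[OF B(1) assms(1)] B(3) by (rule equalityI)
  let ?f = "\<lambda>u. \<Sum>v\<in>B. fscale (u v) v"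
  have img: "?f ` (PiE B (\<lambda>_. UNIV)) = V"
  proof -
    have "?f ` (PiE B (\<lambda>_. UNIV)) = range ?f"
    proof
      show "range ?f \<subseteq> ?f ` (PiE B (\<lambda>_. UNIV))"
      proof
        fix x assume "x \<in> range ?f"
        then obtain u where "x = ?f u" by blast
        moreover have "?f u = ?f (restrict u B)" by (intro sum.cong) auto
        ultimately have e: "x = ?f (restrict u B)" by (rule trans)
        have "restrict u B \<in> PiE B (\<lambda>_. UNIV)" by simp
        with e show "x \<in> ?f ` (PiE B (\<lambda>_. UNIV))" by (rule image_eqI)
      qed
    qed (rule image_subsetI, rule rangeI)
    also have "\<dots> = VS.span B" by (rule VS.span_finite[OF fB, symmetric])
    finally show ?thesis using spanB by (rule trans)
  qed
  have inj: "inj_on ?f (PiE B (\<lambda>_. UNIV))"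
  proof (rule inj_onI)
    fix u w assume u: "u \<in> PiE B (\<lambda>_. UNIV)" and w: "w \<in> PiE B (\<lambda>_. UNIV)" and eq: "?f u = ?f w"
    have "(\<Sum>v\<in>B. fscale (u v - w v) v) = ?f u - ?f w"
      by (simp add: VS.scale_left_diff_distrib sum_subtractf)
    then have z: "(\<Sum>v\<in>B. fscale (u v - w v) v) = 0" using eq by simp
    have "u v = w v" if "v \<in> B" for v
      using VS.independentD[OF B(2) fB order_refl z that] by simp
    then show "u = w" using u w by (auto intro: PiE_ext)
  qed
  have "card V = card (PiE B (\<lambda>_. (UNIV::'a set)))"
    using card_image[OF inj] img by simp
  also have "\<dots> = card (UNIV::'a set) ^ card B" by (simp add: card_PiE fB)
  finally show ?thesis using B(4) by simp
qed


lemma frob_prime: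
  fixes x y :: "'a::comm_ring_1"
  assumes p: "CHAR('a) = p" "prime p"
  shows "(x + y) ^ p = x ^ p + y ^ p"
proof -
  have p0: "p \<noteq> 0" using p(2) by auto
  have "(x + y) ^ p = (\<Sum>k\<le>p. of_nat (p choose k) * x ^ k * y ^ (p - k))"
    by (rule binomial_ring)
  also have "\<dots> = (\<Sum>k\<in>{0,p}. of_nat (p choose k) * x ^ k * y ^ (p - k))"
  proof (rule sum.mono_neutral_right)
    show "\<forall>k\<in>{..p} - {0, p}. of_nat (p choose k) * x ^ k * y ^ (p - k) = 0"
    proof
      fix k assume k: "k \<in> {..p} - {0, p}"
      then have "p dvd (p choose k)" using dvd_choose_prime[of k p] p(2) by auto
      then have "(of_nat (p choose k) :: 'a) = 0" using p(1) of_nat_eq_0_iff_char_dvd by blast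
      then show "of_nat (p choose k) * x ^ k * y ^ (p - k) = 0" by simp
    qed
  qed auto
  also have "\<dots> = x ^ p + y ^ p" using p0 by simp
  finally show ?thesis .
qed

lemma frob_pow:
  fixes x y :: "'a::comm_ring_1"
  assumes p: "CHAR('a) = p" "prime p"
  shows "(x + y) ^ (p ^ k) = x ^ (p ^ k) + y ^ (p ^ k)"
proof (induction k)
  case (Suc k)
  have "(x + y) ^ (p ^ Suc k) = ((x + y) ^ (p ^ k)) ^ p" by (simp only: power_Suc2 power_mult)
  also have "\<dots> = (x ^ (p ^ k) + y ^ (p ^ k)) ^ p" using Suc by simp
  also have "\<dots> = (x ^ (p ^ k)) ^ p + (y ^ (p ^ k)) ^ p" by (rule frob_prime[OF p])
  finally show ?case by (simp only: power_Suc2 power_mult)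
qed simp

lemma frob_add:
  fixes x y :: "'a::{finite,field}"
  assumes "primepow r" "card (UNIV::'a set) = r ^ 2"
  shows "(x + y) ^ r = x ^ r + y ^ r"
proof -
  obtain p k where pk: "prime p" "k > 0" "r = p ^ k" using assms(1) unfolding primepow_def by blast
  have cp: "CHAR('a) > 0" by (rule finite_imp_CHAR_pos) simp
  have pc: "prime CHAR('a)" using prime_CHAR_semidom[OF cp] .
  have "CHAR('a) dvd r ^ 2" using CHAR_dvd_CARD[where 'a='a] assms(2) by simp
  then have "CHAR('a) dvd p ^ (k * 2)" using pk(3) by (simp add: power_mult)
  then have "CHAR('a) dvd p" using pc prime_dvd_power by blast
  then have "CHAR('a) = p" using pc pk(1) primes_dvd_imp_eq by blast
  then show ?thesis using frob_pow[of p x y k] pk by simp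
qed

lemma pow_card:
  fixes x :: "'a::{finite,field}"
  shows "x ^ card (UNIV :: 'a set) = x"
proof (cases "x = 0")
  case False
  have "x * (\<Prod>y\<in>UNIV-{0}. x * y) = x * x ^ (card (UNIV :: 'a set) - 1) * \<Prod>(UNIV-{0})"
    by (simp add: prod.distrib mult_ac)
  also have "x * x ^ (card (UNIV :: 'a set) - 1) = x ^ Suc (card (UNIV :: 'a set) - 1)"
    by (subst power_Suc) auto
  also have "Suc (card (UNIV :: 'a set) - 1) = card (UNIV :: 'a set)"
    using finite_UNIV_card_ge_0[where ?'a = 'a] by simp
  also have "(\<Prod>y\<in>UNIV-{0}. x * y) = (\<Prod>y\<in>UNIV-{0}. y)"
    by (rule prod.reindex_bij_witness[of _ "\<lambda>y. y / x" "\<lambda>y. x * y"]) (use False in auto)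
  finally show ?thesis
    by simp
qed (use finite_UNIV_card_ge_0[where ?'a = 'a] in auto)

lemma exists_b:
  assumes "card (UNIV::'a::{finite,field} set) = r ^ 2" "r \<ge> 3"
  shows "\<exists>b::'a. b \<noteq> 0 \<and> b ^ (r + 1) \<noteq> -1"
proof (rule ccontr)
  assume "\<not> ?thesis"
  then have all: "\<And>b::'a. b \<noteq> 0 \<Longrightarrow> b ^ (r + 1) = -1" by blast
  define P :: "'a poly" where "P = monom 1 (r + 1) + [:1:]"
  have dP: "degree P = r + 1" unfolding P_def
    by (subst degree_add_eq_left) (auto simp: degree_monom_eq)
  then have P0: "P \<noteq> 0" by auto
  have "UNIV - {0} \<subseteq> {x. poly P x = 0}"
    using all by (auto simp: P_def poly_monom)
  then have "card (UNIV - {0::'a}) \<le> card {x. poly P x = 0}"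
    by (intro card_mono) auto
  also have "\<dots> \<le> r + 1" using card_poly_roots_bound[OF P0] dP by simp
  finally have "r ^ 2 - 1 \<le> r + 1" using assms(1) by (simp add: card_Diff_singleton)
  moreover have "r ^ 2 \<ge> 3 * r" using assms(2) by (simp add: power2_eq_square)
  ultimately show False using assms(2) by linarith
qed


definition glue :: "nat \<Rightarrow> (nat \<Rightarrow> 'a::zero) \<Rightarrow> (nat \<Rightarrow> 'a) \<Rightarrow> nat \<Rightarrow> 'a" where
  "glue m x y = (\<lambda>i. if i < m then x i else y (i - m))"

lemma sum_split_add: fixes m n :: nat shows "(\<Sum>i<m+n. f i) = (\<Sum>i<m. f i) + (\<Sum>i<n. (f (i + m) :: 'b::comm_monoid_add))"
  by (induction n) (auto simp: add_ac)

lemma glue_vecs: "x \<in> vecs m \<Longrightarrow> y \<in> vecs m \<Longrightarrow> glue m x y \<in> vecs (2 * m)"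
  by (auto simp: vecs_def glue_def)

lemma glue_ip: "herm_ip r (2 * m) (glue m x1 y1) (glue m x2 y2) = herm_ip r m x1 x2 + herm_ip r m y1 y2"
proof -
  have "herm_ip r (2 * m) (glue m x1 y1) (glue m x2 y2) =
     (\<Sum>i<m+m. glue m x1 y1 i * (glue m x2 y2 i) ^ r)" by (simp add: herm_ip_def mult_2)
  also have "\<dots> = (\<Sum>i<m. glue m x1 y1 i * (glue m x2 y2 i) ^ r) + (\<Sum>i<m. glue m x1 y1 (i+m) * (glue m x2 y2 (i+m)) ^ r)"
    by (rule sum_split_add)
  also have "\<dots> = herm_ip r m x1 x2 + herm_ip r m y1 y2"
    by (simp add: herm_ip_def glue_def)
  finally show ?thesis .
qed

lemma glue_weight:
  assumes "x \<in> vecs m" "y \<in> vecs m"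
  shows "hweight (2 * m) (glue m x y) = hweight m x + hweight m y"
proof -
  have eq: "{i. i < 2 * m \<and> glue m x y i \<noteq> 0} = {i. i < m \<and> x i \<noteq> 0} \<union> (\<lambda>i. i + m) ` {i. i < m \<and> y i \<noteq> 0}"
  proof (intro equalityI subsetI)
    fix i assume "i \<in> {i. i < 2 * m \<and> glue m x y i \<noteq> 0}"
    then show "i \<in> {i. i < m \<and> x i \<noteq> 0} \<union> (\<lambda>i. i + m) ` {i. i < m \<and> y i \<noteq> 0}"
      by (cases "i < m") (auto simp: glue_def image_iff intro!: exI[of _ "i - m"])
  qed (auto simp: glue_def)
  have "card ({i. i < m \<and> x i \<noteq> 0} \<union> (\<lambda>i. i + m) ` {i. i < m \<and> y i \<noteq> 0}) =
        card {i. i < m \<and> x i \<noteq> 0} + card ((\<lambda>i. i + m) ` {i. i < m \<and> y i \<noteq> 0})"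
    by (rule card_Un_disjoint) auto
  also have "card ((\<lambda>i. i + m) ` {i. i < m \<and> y i \<noteq> 0}) = card {i. i < m \<and> y i \<noteq> 0}"
    by (rule card_image) (auto simp: inj_on_def)
  finally show ?thesis unfolding hweight_def eq .
qed

lemma weight_diff:
  fixes x y :: "nat \<Rightarrow> 'a::field"
  shows "hweight n (\<lambda>i. a * x i - y i) \<le> hweight n x + hweight n y"
proof -
  have "{i. i < n \<and> a * x i - y i \<noteq> 0} \<subseteq> {i. i < n \<and> x i \<noteq> 0} \<union> {i. i < n \<and> y i \<noteq> 0}"
    by auto
  then have "card {i. i < n \<and> a * x i - y i \<noteq> 0} \<le> card ({i. i < n \<and> x i \<noteq> 0} \<union> {i. i < n \<and> y i \<noteq> 0})"
    by (intro card_mono) auto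
  also have "\<dots> \<le> card {i. i < n \<and> x i \<noteq> 0} + card {i. i < n \<and> y i \<noteq> 0}" by (rule card_Un_le)
  finally show ?thesis unfolding hweight_def .
qed

lemma weight_scale:
  fixes x :: "nat \<Rightarrow> 'a::field"
  assumes "c \<noteq> 0"
  shows "hweight n (fscale c x) = hweight n x"
  using assms by (simp add: hweight_def fscale_def)


lemma ring_id:
  fixes a1 c1 A D \<beta> b \<beta>r br :: "'a::comm_ring_1"
  shows "(a1 + c1) * (A + D) + (\<beta> * a1 + b * c1) * (\<beta>r * A + br * D) =
    (1 + \<beta> * \<beta>r) * (a1 * A) + (1 + b * br) * (c1 * D) + (a1 * D) * (1 + \<beta> * br) + (c1 * A) * (1 + b * \<beta>r)"
  by (simp add: algebra_simps)

theorem corollary4p1: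
  fixes r m k1 k2 d1 d2 :: nat
    and C1 C2 :: "(nat \<Rightarrow> 'a::{finite,field}) set"
  assumes "primepow r" and "r \<ge> 3" and "card (UNIV :: 'a set) = r ^ 2"
    and "is_nkd_code m k1 d1 C1" and "herm_self_orth r m C1"
    and "is_nkd_code m k2 d2 C2" and "herm_self_orth r m C2"
  shows "\<exists>(C :: (nat \<Rightarrow> 'a) set) d. is_nkd_code (2 * m) (k1 + k2) d C
           \<and> herm_self_orth r (2 * m) C \<and> d \<ge> min (2 * d1) d2"
proof -
  have C1v: "C1 \<subseteq> vecs m" and S1: "VS.subspace C1" and D1: "VS.dim C1 = k1"
    and W1: "has_min_weight m C1 d1"
    using assms(4) unfolding is_nkd_code_def linear_code_def code_dim_def by auto
  have C2v: "C2 \<subseteq> vecs m" and S2: "VS.subspace C2" and D2: "VS.dim C2 = k2"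
    and W2: "has_min_weight m C2 d2"
    using assms(6) unfolding is_nkd_code_def linear_code_def code_dim_def by auto
  have so1: "\<And>u v. u \<in> C1 \<Longrightarrow> v \<in> C1 \<Longrightarrow> herm_ip r m u v = 0"
    using assms(5) unfolding herm_self_orth_def herm_dual_def by blast
  have so2: "\<And>u v. u \<in> C2 \<Longrightarrow> v \<in> C2 \<Longrightarrow> herm_ip r m u v = 0"
    using assms(7) unfolding herm_self_orth_def herm_dual_def by blast
  have frob: "\<And>x y::'a. (x + y) ^ r = x ^ r + y ^ r"
    by (rule frob_add[OF assms(1) assms(3)])
  have rr: "\<And>x::'a. x ^ (r * r) = x"
    using pow_card[where 'a='a] assms(3) by (simp add: power2_eq_square)
  obtain b :: 'a where b: "b \<noteq> 0" "b ^ (r + 1) \<noteq> -1"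
    using exists_b[OF assms(3) assms(2)] by blast
  define \<beta> where "\<beta> = - inverse (b ^ r)"
  have r0: "r > 0" using assms(2) by simp
  have m1: "(-1::'a) ^ r = -1"
  proof -
    have "(1 + (-1::'a)) ^ r = 1 ^ r + (-1) ^ r" by (rule frob)
    moreover have "(0::'a) ^ r = 0" using r0 by simp
    ultimately have "0 = 1 + (-1::'a) ^ r" by simp
    then show ?thesis by (simp add: eq_neg_iff_add_eq_0 add.commute)
  qed
  have e1: "\<beta> * b ^ r = -1" unfolding \<beta>_def using b(1) by simp
  have e2: "b * \<beta> ^ r = -1"
  proof -
    have "\<beta> = (-1) * inverse (b ^ r)" unfolding \<beta>_def by simp
    then have "\<beta> ^ r = (-1) ^ r * (inverse (b ^ r)) ^ r" by (simp only: power_mult_distrib)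
    also have "(inverse (b ^ r)) ^ r = inverse (b ^ (r * r))" by (simp add: power_inverse power_mult)
    also have "b ^ (r * r) = b" by (rule rr)
    finally have "\<beta> ^ r = - inverse b" using m1 by simp
    then show ?thesis using b(1) by simp
  qed
  have bne: "\<beta> - b \<noteq> 0"
  proof
    assume "\<beta> - b = 0"
    then have "\<beta> = b" by simp
    then have "b ^ (r + 1) = -1" using e1 by (simp add: power_Suc2 mult.commute)
    then show False using b(2) by simp
  qed
  have \<beta>0: "\<beta> \<noteq> 0" unfolding \<beta>_def using b(1) by simp
  define enc where "enc u v = glue m (u + v) (fscale \<beta> u + fscale b v)" for u v :: "nat \<Rightarrow> 'a"
  define C where "C = {enc u v | u v. u \<in> C1 \<and> v \<in> C2}"
  have vadd: "\<And>u v :: nat \<Rightarrow> 'a. u \<in> vecs m \<Longrightarrow> v \<in> vecs m \<Longrightarrow> u + v \<in> vecs m"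
    by (simp add: vecs_def)
  have vsc: "\<And>c (u :: nat \<Rightarrow> 'a). u \<in> vecs m \<Longrightarrow> fscale c u \<in> vecs m"
    by (simp add: vecs_def fscale_def)
  have encv: "\<And>u v. u \<in> vecs m \<Longrightarrow> v \<in> vecs m \<Longrightarrow> enc u v \<in> vecs (2 * m)"
    unfolding enc_def by (intro glue_vecs vadd vsc)
  have CV: "C \<subseteq> vecs (2 * m)" unfolding C_def using encv C1v C2v by blast
  have enc0: "enc 0 0 = 0" by (simp add: enc_def glue_def fscale_def fun_eq_iff)
  have encadd: "\<And>u1 v1 u2 v2. enc u1 v1 + enc u2 v2 = enc (u1 + u2) (v1 + v2)"
    by (simp add: enc_def glue_def fscale_def fun_eq_iff algebra_simps)
  have encsc: "\<And>c u v. fscale c (enc u v) = enc (fscale c u) (fscale c v)"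
    by (simp add: enc_def glue_def fscale_def fun_eq_iff algebra_simps)
  have SC: "VS.subspace C"
    unfolding VS.subspace_def
  proof (intro conjI ballI allI)
    have "enc 0 0 \<in> C" unfolding C_def using VS.subspace_0[OF S1] VS.subspace_0[OF S2] by blast
    then show "0 \<in> C" by (simp only: enc0)
  next
    fix x y assume "x \<in> C" "y \<in> C"
    then obtain u1 v1 u2 v2 where "x = enc u1 v1" "y = enc u2 v2" "u1 \<in> C1" "v1 \<in> C2" "u2 \<in> C1" "v2 \<in> C2"
      unfolding C_def by blast
    then have "enc (u1 + u2) (v1 + v2) \<in> C" unfolding C_def using VS.subspace_add[OF S1] VS.subspace_add[OF S2] by blast
    then show "x + y \<in> C" using \<open>x = enc u1 v1\<close> \<open>y = enc u2 v2\<close> by (simp only: encadd)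
  next
    fix c x assume "x \<in> C"
    then obtain u v where "x = enc u v" "u \<in> C1" "v \<in> C2" unfolding C_def by blast
    then have "enc (fscale c u) (fscale c v) \<in> C" unfolding C_def using VS.subspace_scale[OF S1] VS.subspace_scale[OF S2] by blast
    then show "fscale c x \<in> C" using \<open>x = enc u v\<close> by (simp only: encsc)
  qed
  have ipz: "herm_ip r (2 * m) (enc u1 v1) (enc u2 v2) = 0"
    if "u1 \<in> C1" "u2 \<in> C1" "v1 \<in> C2" "v2 \<in> C2" for u1 u2 v1 v2
  proof -
    have "herm_ip r (2 * m) (enc u1 v1) (enc u2 v2) =
      herm_ip r m (u1 + v1) (u2 + v2) + herm_ip r m (fscale \<beta> u1 + fscale b v1) (fscale \<beta> u2 + fscale b v2)"
      unfolding enc_def by (rule glue_ip)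
    also have "\<dots> = (\<Sum>i<m. (u1 i + v1 i) * (u2 i + v2 i) ^ r + (\<beta> * u1 i + b * v1 i) * (\<beta> * u2 i + b * v2 i) ^ r)"
      by (simp add: herm_ip_def fscale_def sum.distrib)
    also have "\<dots> = (\<Sum>i<m. (1 + \<beta> * \<beta> ^ r) * (u1 i * u2 i ^ r) + (1 + b * b ^ r) * (v1 i * v2 i ^ r))"
    proof (rule sum.cong[OF refl])
      fix i
      have f1: "(u2 i + v2 i) ^ r = u2 i ^ r + v2 i ^ r" by (rule frob)
      have f2: "(\<beta> * u2 i + b * v2 i) ^ r = \<beta> ^ r * u2 i ^ r + b ^ r * v2 i ^ r"
        by (simp only: frob power_mult_distrib)
      show "(u1 i + v1 i) * (u2 i + v2 i) ^ r + (\<beta> * u1 i + b * v1 i) * (\<beta> * u2 i + b * v2 i) ^ r =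
        (1 + \<beta> * \<beta> ^ r) * (u1 i * u2 i ^ r) + (1 + b * b ^ r) * (v1 i * v2 i ^ r)"
        unfolding f1 f2 ring_id e1 e2 by simp
    qed
    also have "\<dots> = (1 + \<beta> * \<beta> ^ r) * herm_ip r m u1 u2 + (1 + b * b ^ r) * herm_ip r m v1 v2"
      by (simp add: herm_ip_def sum.distrib sum_distrib_left)
    also have "\<dots> = 0" using so1[OF that(1,2)] so2[OF that(3,4)] by simp
    finally show ?thesis .
  qed
  have SO: "herm_self_orth r (2 * m) C"
    unfolding herm_self_orth_def herm_dual_def
  proof
    fix w assume w: "w \<in> C"
    then have "w \<in> vecs (2 * m)" using CV by blast
    moreover have "\<forall>u\<in>C. herm_ip r (2 * m) u w = 0"
      using w ipz unfolding C_def by blast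
    ultimately show "w \<in> {v \<in> vecs (2 * m). \<forall>u\<in>C. herm_ip r (2 * m) u v = 0}" by blast
  qed
  have fin1: "finite C1" using C1v finite_vecs finite_subset by blast
  have fin2: "finite C2" using C2v finite_vecs finite_subset by blast
  have finC: "finite C" using CV finite_vecs finite_subset by blast
  have Cimg: "C = (\<lambda>(u, v). enc u v) ` (C1 \<times> C2)" unfolding C_def by auto
  have inj: "inj_on (\<lambda>(u, v). enc u v) (C1 \<times> C2)"
  proof (rule inj_onI, clarify)
    fix u v u' v' assume uv: "u \<in> C1" "v \<in> C2" "u' \<in> C1" "v' \<in> C2" and eq: "enc u v = enc u' v'"
    have pt: "u i = u' i \<and> v i = v' i" for i
    proof (cases "i < m")
      case True
      have a: "u i + v i = u' i + v' i" using fun_cong[OF eq, of i] True by (simp add: enc_def glue_def)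
      have c: "\<beta> * u i + b * v i = \<beta> * u' i + b * v' i"
        using fun_cong[OF eq, of "i + m"] True by (simp add: enc_def glue_def fscale_def)
      have "(\<beta> - b) * v i = \<beta> * (u i + v i) - (\<beta> * u i + b * v i)" by (simp add: algebra_simps)
      also have "\<dots> = \<beta> * (u' i + v' i) - (\<beta> * u' i + b * v' i)" using a c by simp
      also have "\<dots> = (\<beta> - b) * v' i" by (simp add: algebra_simps)
      finally have "v i = v' i" using bne by simp
      then show ?thesis using a by simp
    next
      case False
      have "u \<in> vecs m" "u' \<in> vecs m" "v \<in> vecs m" "v' \<in> vecs m" using uv C1v C2v by blast+
      then show ?thesis using False by (simp add: vecs_def)
    qed
    then show "u = u' \<and> v = v'" by (auto simp: fun_eq_iff)
  qed
  have "3 * 3 \<le> r * r" using assms(2) by (intro mult_le_mono) auto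
  then have q1: "1 < card (UNIV :: 'a set)" by (simp add: assms(3) power2_eq_square)
  have "card (UNIV :: 'a set) ^ VS.dim C = card C" using card_subspace[OF SC finC] by simp
  also have "card C = card C1 * card C2"
    using Cimg card_image[OF inj] card_cartesian_product by simp
  also have "\<dots> = card (UNIV :: 'a set) ^ (k1 + k2)"
    using card_subspace[OF S1 fin1] card_subspace[OF S2 fin2] D1 D2 by (simp add: power_add)
  finally have DC: "VS.dim C = k1 + k2" using power_inject_exp[OF q1] by blast
  have wt: "hweight (2 * m) (enc u v) = hweight m (u + v) + hweight m (fscale \<beta> u + fscale b v)"
    if "u \<in> vecs m" "v \<in> vecs m" for u v
    unfolding enc_def by (intro glue_weight vadd vsc that)
  have bound: "min (2 * d1) d2 \<le> hweight (2 * m) (enc u v)"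
    if uv: "u \<in> C1" "v \<in> C2" "enc u v \<noteq> 0" for u v
  proof (cases "v = 0")
    case True
    have "u \<noteq> 0" using True uv(3) enc0 by auto
    then have "d1 \<le> hweight m u" using W1 uv(1) unfolding has_min_weight_def by blast
    moreover have "hweight (2 * m) (enc u v) = 2 * hweight m u"
    proof -
      have "fscale \<beta> u + fscale b v = fscale \<beta> u" using True by (simp add: fscale_def fun_eq_iff)
      moreover have "u \<in> vecs m" "v \<in> vecs m" using uv C1v C2v by blast+
      ultimately show ?thesis using wt[of u v] True weight_scale[OF \<beta>0] by (simp add: mult_2)
    qed
    ultimately show ?thesis by simp
  next
    case False
    have uvv: "u \<in> vecs m" "v \<in> vecs m" using uv C1v C2v by blast+
    from False have "d2 \<le> hweight m v" using W2 uv(2) unfolding has_min_weight_def by blast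
    also have "hweight m v = hweight m (fscale (\<beta> - b) v)" using weight_scale[OF bne] by simp
    also have "fscale (\<beta> - b) v = (\<lambda>i. \<beta> * (u + v) i - (fscale \<beta> u + fscale b v) i)"
      by (simp add: fscale_def fun_eq_iff algebra_simps)
    also have "hweight m \<dots> \<le> hweight m (u + v) + hweight m (fscale \<beta> u + fscale b v)"
      by (rule weight_diff)
    also have "hweight m (u + v) + hweight m (fscale \<beta> u + fscale b v) = hweight (2 * m) (enc u v)"
      by (rule wt[OF uvv, symmetric])
    finally show ?thesis by simp
  qed
  obtain u0 where u0: "u0 \<in> C1" "u0 \<noteq> 0" using W1 unfolding has_min_weight_def by blast
  have "enc u0 0 \<in> C" unfolding C_def using u0(1) VS.subspace_0[OF S2] by blast
  moreover have "enc u0 0 \<noteq> 0"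
  proof
    assume z: "enc u0 0 = 0"
    obtain i where i: "u0 i \<noteq> 0" using u0(2) by (auto simp: fun_eq_iff)
    have "u0 \<in> vecs m" using u0(1) C1v by blast
    then have "i < m" using i unfolding vecs_def by (metis (mono_tags) mem_Collect_eq not_less)
    then have "enc u0 0 i = u0 i" by (simp add: enc_def glue_def)
    then show False using z i by simp
  qed
  ultimately have ex: "\<exists>n. \<exists>w\<in>C. w \<noteq> 0 \<and> hweight (2 * m) w = n" by blast
  define d where "d = (LEAST n. \<exists>w\<in>C. w \<noteq> 0 \<and> hweight (2 * m) w = n)"
  have dW: "\<exists>w\<in>C. w \<noteq> 0 \<and> hweight (2 * m) w = d"
    unfolding d_def using LeastI_ex[OF ex] .
  have dle: "\<forall>w\<in>C. w \<noteq> 0 \<longrightarrow> d \<le> hweight (2 * m) w"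
    unfolding d_def by (auto intro: Least_le)
  have HM: "has_min_weight (2 * m) C d" unfolding has_min_weight_def using dW dle by blast
  have dge: "min (2 * d1) d2 \<le> d"
  proof -
    obtain w where w: "w \<in> C" "w \<noteq> 0" "hweight (2 * m) w = d" using dW by blast
    then obtain u v where "w = enc u v" "u \<in> C1" "v \<in> C2" unfolding C_def by blast
    then show ?thesis using bound w by blast
  qed
  have "is_nkd_code (2 * m) (k1 + k2) d C"
    unfolding is_nkd_code_def linear_code_def code_dim_def using CV SC DC HM by blast
  then show ?thesis using SO dge by blast
qed

end
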